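(* Let $G=(V,E)$ be a computation graph whose vertices $v$ carry local types $\mathcal T_v$, and such that for each non-source vertex $v$ the associated function $f_v:\prod_{(u,v)\in E}\mathcal T_u\to\mathcal T_v$ is representable in $\mathrm{ResMLP}(d_v,L_v)$; for a source vertex $v$ put $d_v=d_{\mathcal T_v}$ and $L_v=0$. Then the function induced by $G$, from the product of the types of the source vertices to the product of the types of the sink vertices, is representable in $\mathrm{ResMLP}\big(\sum_{v\in V}d_v,\ \mathrm{depth}(G)\,(\max_{v\in V}L_v+1)+1\big)$.
   Context: A local type $\mathcal T$ is a finite set $S$ with an injective encoding $\phi_{\mathcal T}:S\to\mathbb{R}^{d_{\mathcal T}}$; product types are encoded by concatenation. A computation graph is a finite directed acyclic graph $G=(V,E)$ where each vertex $v$ has a local type $\mathcal T_v$ and each vertex with at least one incoming edge has a function $f_v$ from the product (in a fixed order) of the types of its in-neighbours to $\mathcal T_v$. Source vertices have no incoming edges, sink vertices no outgoing edges. The induced function assigns the inputs to the sources and, once all in-neighbours of $v$ have values $x_{u}$, assigns $v$ the value $f_v((x_u)_u)$; its output is the tuple of values at the sinks. $\mathrm{depth}(G)$ is the number of edges of a longest directed path in $G$. A single-layer fully connected network of dimension $d$ is $f_{\mathrm{fcn}}(X)=W_2\,\mathrm{ReLU}(W_1X+B_1)+B_2$ with $W_1\in\mathbb{R}^{4d\times d}$, $B_1\in\mathbb{R}^{4d}$, $W_2\in\mathbb{R}^{d\times 4d}$, $B_2\in\mathbb{R}^d$. $\mathrm{ResMLP}(d,L)$ is the set of maps $X\mapsto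 X^{(L)}$ with $X^{(0)}=X$, $X^{(l)}=X^{(l-1)}+f^{(l)}_{\mathrm{fcn}}(X^{(l-1)})$. A function $f:\mathcal A\to\mathcal B$ between local types is representable in $\mathrm{ResMLP}(d,L)$ (with $d\ge\max(d_{\mathcal A},d_{\mathcal B})$) if there is $\tilde f\in\mathrm{ResMLP}(d,L)$ with $\iota_1\circ\phi_{\mathcal B}\circ f=\tilde f\circ\iota_2\circ\phi_{\mathcal A}$, where $\iota_1,\iota_2$ pad with zeros into $\mathbb{R}^d$. *)

theory Defs
  imports Main Complex_Main
begin

text \<open>A vector in R^d is a real list of length d.  A matrix in R^(m x n) is
  given by its entries W i j for i < m, j < n (entries outside are irrelevant).\<close>

type_synonym fcn_params = "(nat \<Rightarrow> nat \<Rightarrow> real) \<times> (nat \<Rightarrow> real) \<times> (nat \<Rightarrow> nat \<Rightarrow> real) \<times> (nat \<Rightarrow> real)"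

definition relu :: "real \<Rightarrow> real" where
  "relu x = max 0 x"

definition fcn :: "nat \<Rightarrow> fcn_params \<Rightarrow> real list \<Rightarrow> real list" where
  "fcn d p X = (case p of (W1, B1, W2, B2) \<Rightarrow>
     map (\<lambda>i. (\<Sum>k<4*d. W2 i k * relu ((\<Sum>j<d. W1 k j * X ! j) + B1 k)) + B2 i) [0..<d])"

definition res_layer :: "nat \<Rightarrow> fcn_params \<Rightarrow> real list \<Rightarrow> real list" where
  "res_layer d p X = map (\<lambda>i. X ! i + fcn d p X ! i) [0..<d]"

definition resmlp_apply :: "nat \<Rightarrow> fcn_params list \<Rightarrow> real list \<Rightarrow> real list" where
  "resmlp_apply d ps X = fold (res_layer d) ps X"

definition ResMLP :: "nat \<Rightarrow> nat \<Rightarrow> (real list \<Rightarrow> real list) set" where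
  "ResMLP d L = {resmlp_apply d ps | ps. length ps = L}"

definition pad :: "nat \<Rightarrow> real list \<Rightarrow> real list" where
  "pad d x = x @ replicate (d - length x) 0"

definition local_type :: "'a set \<Rightarrow> ('a \<Rightarrow> real list) \<Rightarrow> nat \<Rightarrow> bool" where
  "local_type S enc dm \<longleftrightarrow> finite S \<and> inj_on enc S \<and> (\<forall>x\<in>S. length (enc x) = dm)"

definition prod_set :: "('v \<Rightarrow> 'a set) \<Rightarrow> 'v list \<Rightarrow> 'a list set" where
  "prod_set S us = {xs. length xs = length us \<and> (\<forall>i<length us. xs ! i \<in> S (us ! i))}"

definition prod_enc :: "('v \<Rightarrow> 'a \<Rightarrow> real list) \<Rightarrow> 'v list \<Rightarrow> 'a list \<Rightarrow> real list" where
  "prod_enc enc us xs = concat (map (\<lambda>(u, x). enc u x) (zip us xs))"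

definition prod_dim :: "('v \<Rightarrow> nat) \<Rightarrow> 'v list \<Rightarrow> nat" where
  "prod_dim dm us = sum_list (map dm us)"

definition representable ::
  "nat \<Rightarrow> nat \<Rightarrow> 'a set \<Rightarrow> ('a \<Rightarrow> real list) \<Rightarrow> nat \<Rightarrow> ('b \<Rightarrow> real list) \<Rightarrow> nat
    \<Rightarrow> ('a \<Rightarrow> 'b) \<Rightarrow> bool" where
  "representable d L A encA da encB dB f \<longleftrightarrow>
     max da dB \<le> d \<and>
     (\<exists>F\<in>ResMLP d L. \<forall>x\<in>A. pad d (encB (f x)) = F (pad d (encA x)))"

definition is_source :: "('v \<times> 'v) set \<Rightarrow> 'v \<Rightarrow> bool" where
  "is_source E v \<longleftrightarrow> (\<forall>u. (u, v) \<notin> E)"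

definition is_sink :: "('v \<times> 'v) set \<Rightarrow> 'v \<Rightarrow> bool" where
  "is_sink E v \<longleftrightarrow> (\<forall>w. (v, w) \<notin> E)"

text \<open>Computation graph: finite DAG with vertex set V, in-neighbour lists ins
  (the fixed order of the arguments of f_v), local types (S v, enc v, dm v),
  and functions f v from the product of in-neighbour types to the type of v.\<close>
definition comp_graph ::
  "'v set \<Rightarrow> ('v \<times> 'v) set \<Rightarrow> ('v \<Rightarrow> 'v list) \<Rightarrow> ('v \<Rightarrow> 'a set) \<Rightarrow> ('v \<Rightarrow> 'a \<Rightarrow> real list)
    \<Rightarrow> ('v \<Rightarrow> nat) \<Rightarrow> ('v \<Rightarrow> 'a list \<Rightarrow> 'a) \<Rightarrow> bool" where
  "comp_graph V E ins S enc dm f \<longleftrightarrow>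
     finite V \<and> E \<subseteq> V \<times> V \<and> acyclic E \<and>
     (\<forall>v\<in>V. local_type (S v) (enc v) (dm v)) \<and>
     (\<forall>v\<in>V. distinct (ins v) \<and> set (ins v) = {u. (u, v) \<in> E}) \<and>
     (\<forall>v\<in>V. \<not> is_source E v \<longrightarrow> (\<forall>xs\<in>prod_set S (ins v). f v xs \<in> S v))"

text \<open>Evaluation: sources get their input value; after n rounds every vertex
  whose longest incoming path has length \<le> n carries its correct value.\<close>
primrec eval_graph ::
  "('v \<times> 'v) set \<Rightarrow> ('v \<Rightarrow> 'v list) \<Rightarrow> ('v \<Rightarrow> 'a list \<Rightarrow> 'a) \<Rightarrow> ('v \<Rightarrow> 'a) \<Rightarrow> nat \<Rightarrow> 'v \<Rightarrow> 'a" where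
  "eval_graph E ins f inp 0 v = inp v"
| "eval_graph E ins f inp (Suc n) v =
     (if is_source E v then inp v else f v (map (eval_graph E ins f inp n) (ins v)))"

definition induced ::
  "'v set \<Rightarrow> ('v \<times> 'v) set \<Rightarrow> ('v \<Rightarrow> 'v list) \<Rightarrow> ('v \<Rightarrow> 'a list \<Rightarrow> 'a) \<Rightarrow> 'v list \<Rightarrow> 'v list
    \<Rightarrow> 'a list \<Rightarrow> 'a list" where
  "induced V E ins f srcs snks xs =
     map (eval_graph E ins f (\<lambda>v. the (map_of (zip srcs xs) v)) (card V)) snks"

definition is_path :: "('v \<times> 'v) set \<Rightarrow> 'v list \<Rightarrow> bool" where
  "is_path E p \<longleftrightarrow> p \<noteq> [] \<and> (\<forall>i. Suc i < length p \<longrightarrow> (p ! i, p ! Suc i) \<in> E)"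

definition depth :: "('v \<times> 'v) set \<Rightarrow> nat" where
  "depth E = Max {length p - 1 | p. is_path E p}"

end

theory Submission
  imports Defs
begin


type_synonym unit_t = "(nat \<Rightarrow> real) \<times> real \<times> (nat \<Rightarrow> real)"

definition mk_layer :: "unit_t list \<Rightarrow> (nat \<Rightarrow> real) \<Rightarrow> fcn_params" where
  "mk_layer us B2 = (\<lambda>k j. if k < length us then fst (us!k) j else 0,
                     \<lambda>k. if k < length us then fst (snd (us!k)) else 0,
                     \<lambda>i k. if k < length us then snd (snd (us!k)) i else 0, B2)"

definition uval :: "nat \<Rightarrow> real list \<Rightarrow> nat \<Rightarrow> unit_t \<Rightarrow> real" where
  "uval d X i u = snd (snd u) i * relu ((\<Sum>j<d. fst u j * X!j) + fst (snd u))"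

lemma res_mk_layer:
  assumes "length us \<le> 4*d" "length X = d"
  shows "res_layer d (mk_layer us B2) X = map (\<lambda>i. X!i + (\<Sum>u\<leftarrow>us. uval d X i u) + B2 i) [0..<d]"
proof (rule nth_equalityI)
  fix i assume "i < length (res_layer d (mk_layer us B2) X)"
  hence i: "i < d" by (simp add: res_layer_def)
  have "(\<Sum>k<4*d. (if k < length us then snd (snd (us!k)) i else 0) *
          relu ((\<Sum>j<d. (if k < length us then fst (us!k) j else 0) * X!j) + (if k < length us then fst (snd (us!k)) else 0)))
        = (\<Sum>k<length us. uval d X i (us!k))"
    by (rule sum.mono_neutral_cong_right) (use assms in \<open>auto simp: uval_def\<close>)
  also have "\<dots> = (\<Sum>u\<leftarrow>us. uval d X i u)"
    by (simp add: sum_list_sum_nth atLeast0LessThan)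
  finally have S: "(\<Sum>k<4*d. (if k < length us then snd (snd (us!k)) i else 0) *
          relu ((\<Sum>j<d. (if k < length us then fst (us!k) j else 0) * X!j) + (if k < length us then fst (snd (us!k)) else 0))) = (\<Sum>u\<leftarrow>us. uval d X i u)" .
  show "res_layer d (mk_layer us B2) X ! i = map (\<lambda>i. X!i + (\<Sum>u\<leftarrow>us. uval d X i u) + B2 i) [0..<d] ! i"
    proof -
    have e: "[0..<d] ! i = i" using i by simp
    show ?thesis using i S unfolding res_layer_def fcn_def mk_layer_def by (simp only: nth_map_upt split: prod.split) simp
  qed
qed (simp add: res_layer_def)

definition selval :: "real list \<Rightarrow> nat option \<Rightarrow> real" where
  "selval X s = (case s of None \<Rightarrow> 0 | Some j \<Rightarrow> X!j)"

definition selc :: "nat option list \<Rightarrow> nat \<Rightarrow> nat \<Rightarrow> real" where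
  "selc S k i = (if S!i = Some k then 1 else 0) - (if i = k then 1 else 0)"

definition sel_units :: "nat \<Rightarrow> nat option list \<Rightarrow> unit_t list" where
  "sel_units d S = concat (map (\<lambda>k. [(\<lambda>j. if j = k then 1 else 0, 0, selc S k),
       (\<lambda>j. if j = k then -1 else 0, 0, \<lambda>i. - selc S k i)]) [0..<d])"

definition sel_layer :: "nat \<Rightarrow> nat option list \<Rightarrow> fcn_params" where
  "sel_layer d S = mk_layer (sel_units d S) (\<lambda>_. 0)"

lemma sum_list_concat': "sum_list (concat xss) = sum_list (map sum_list xss)"
  by (induct xss) auto

lemma length_fold_res: "length X = d \<Longrightarrow> length (fold (res_layer d) ps X) = d"
  by (induct ps arbitrary: X) (auto simp: res_layer_def)

lemma fold_triv: "fold (\<lambda>j Y. Y) xs y = y"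
  by (induct xs) auto

lemma relu_diff: "relu x - relu (-x) = x"
  by (simp add: relu_def max_def)

lemma sel_layer:
  assumes "length S = d" "\<forall>s\<in>set S. \<forall>j. s = Some j \<longrightarrow> j < d" "length X = d"
  shows "res_layer d (sel_layer d S) X = map (selval X) S"
proof -
  have len: "length (sel_units d S) \<le> 4*d"
    by (simp add: sel_units_def length_concat comp_def sum_list_triv)
  have key: "(\<Sum>u\<leftarrow>sel_units d S. uval d X i u) = selval X (S!i) - X!i" if i: "i < d" for i
  proof -
    have dot: "(\<Sum>j<d. (if j = k then c else 0) * X!j) = c * X!k" if "k < d" for k c
      proof - have "(\<Sum>j<d. (if j = k then c else 0) * X!j) = (\<Sum>j<d. if j = k then c * X!k else 0)" by (rule sum.cong) auto thus ?thesis using that by simp qed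
    have "(\<Sum>u\<leftarrow>sel_units d S. uval d X i u) =
          (\<Sum>k\<leftarrow>[0..<d]. selc S k i * relu (X!k) + (- selc S k i) * relu (- X!k))"
      unfolding sel_units_def
      apply (simp add: sum_list_concat' map_concat comp_def uval_def)
      apply (intro arg_cong[where f=sum_list] map_cong refl)
      using dot[of _ 1] dot[of _ "-1"] by simp
    also have "\<dots> = (\<Sum>k<d. selc S k i * X!k)"
    proof -
      have "selc S k i * relu (X!k) + (- selc S k i) * relu (- X!k) = selc S k i * X!k" for k
        using relu_diff[of "X!k"] by (simp add: algebra_simps)
      thus ?thesis by (simp add: interv_sum_list_conv_sum_set_nat atLeast0LessThan)
    qed
    also have "\<dots> = (\<Sum>k<d. (if S!i = Some k then X!k else 0)) - X!i"
    proof -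
      have "selc S k i * X!k = (if S!i = Some k then X!k else 0) - (if i = k then X!k else 0)" for k
        by (simp add: selc_def)
      hence "(\<Sum>k<d. selc S k i * X!k) = (\<Sum>k<d. (if S!i = Some k then X!k else 0)) - (\<Sum>k<d. if i = k then X!k else 0)"
        by (simp add: sum_subtractf)
      moreover have "(\<Sum>k<d. if i = k then X!k else 0) = X!i" using i by (simp add: sum.delta)
      ultimately show ?thesis by simp
    qed
    also have "(\<Sum>k<d. (if S!i = Some k then X!k else 0)) = selval X (S!i)"
    proof (cases "S!i")
      case (Some j)
      have "j < d" using assms(1,2) i Some nth_mem by fastforce
      have "(\<Sum>k<d. (if S!i = Some k then X!k else 0)) = (\<Sum>k<d. if k = j then X!k else 0)"
        by (rule sum.cong) (auto simp: Some)
      thus ?thesis using Some \<open>j < d\<close> by (simp add: selval_def)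
    qed (simp add: selval_def)
    finally show ?thesis .
  qed
  show ?thesis
    unfolding sel_layer_def res_mk_layer[OF len assms(3)]
    by (rule nth_equalityI) (use assms(1) key in auto)
qed



lemma sum_single:
  fixes g :: "'a \<Rightarrow> 'b::comm_monoid_add"
  assumes "finite A" "a \<in> A" "\<And>x. x \<in> A \<Longrightarrow> x \<noteq> a \<Longrightarrow> g x = 0"
  shows "sum g A = g a"
proof -
  have "sum g A = g a + sum g (A - {a})" using assms(1,2) by (simp add: sum.remove)
  also have "sum g (A - {a}) = 0" using assms(3) by (intro sum.neutral) auto
  finally show ?thesis by simp
qed

locale layout = fixes ds :: "nat list"
begin

definition off :: "nat \<Rightarrow> nat" where "off i = (\<Sum>t<i. ds!t)"

definition blk :: "nat \<Rightarrow> real list \<Rightarrow> real list" where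
  "blk i X = map (\<lambda>r. X!(off i + r)) [0..<ds!i]"

lemma off_Suc: "off (Suc i) = off i + ds!i"
  by (simp add: off_def)

lemma off_mono: "i \<le> j \<Longrightarrow> off i \<le> off j"
  unfolding off_def by (rule sum_mono2) auto

lemma off_len: "off (length ds) = sum_list ds"
  by (simp add: off_def sum_list_sum_nth atLeast0LessThan)

lemma off_le: "i \<le> length ds \<Longrightarrow> off i \<le> sum_list ds"
  using off_mono off_len by metis

lemma blk_bound: "i < length ds \<Longrightarrow> r < ds!i \<Longrightarrow> off i + r < sum_list ds"
  using off_le[of "Suc i"] off_Suc[of i] by simp

lemma cover: "c < off m \<Longrightarrow> \<exists>i<m. \<exists>r<ds!i. c = off i + r"
proof (induct m)
  case 0 thus ?case by (simp add: off_def)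
next
  case (Suc m)
  show ?case
  proof (cases "c < off m")
    case True thus ?thesis using Suc(1) by (meson less_SucI)
  next
    case False
    hence "c - off m < ds!m" "c = off m + (c - off m)" using Suc(2) off_Suc[of m] by auto
    thus ?thesis by blast
  qed
qed

lemma cover': "c < sum_list ds \<Longrightarrow> \<exists>i<length ds. \<exists>r<ds!i. c = off i + r"
  using cover[of c "length ds"] off_len by simp

lemma in_blk_iff:
  assumes "i < length ds" "r < ds!i"
  shows "(off i' \<le> off i + r \<and> off i + r < off i' + ds!i') \<longleftrightarrow> i' = i"
proof
  assume h: "off i' \<le> off i + r \<and> off i + r < off i' + ds!i'"
  show "i' = i"
  proof (rule ccontr)
    assume "i' \<noteq> i"
    then consider "i' < i" | "i < i'" by linarith
    thus False
    proof cases
      case 1 hence "off (Suc i') \<le> off i" by (intro off_mono) simp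
      thus False using h off_Suc[of i'] by simp
    next
      case 2 hence "off (Suc i) \<le> off i'" by (intro off_mono) simp
      thus False using h off_Suc[of i] assms by simp
    qed
  qed
qed (use assms in simp)

lemma concat_nth_off:
  assumes "\<And>t. t < m \<Longrightarrow> length (B t) = ds!t" "i < m" "r < ds!i"
  shows "concat (map B [0..<m]) ! (off i + r) = B i ! r"
  using assms
proof (induct m)
  case 0 thus ?case by simp
next
  case (Suc m)
  have len: "length (concat (map B [0..<m])) = off m"
    using Suc(2) by (simp add: length_concat off_def comp_def interv_sum_list_conv_sum_set_nat atLeast0LessThan)
  show ?case
  proof (cases "i < m")
    case True
    have "off i + r < off m" using off_mono[of "Suc i" m] True off_Suc[of i] Suc(4) by simp
    thus ?thesis using Suc True len by (simp add: nth_append)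
  next
    case False hence "i = m" using Suc(3) by simp
    thus ?thesis using len by (simp add: nth_append)
  qed
qed

lemma length_concat_blocks:
  assumes "\<And>t. t < length ds \<Longrightarrow> length (B t) = ds!t"
  shows "length (concat (map B [0..<length ds])) = sum_list ds"
  using assms by (simp add: length_concat off_def comp_def interv_sum_list_conv_sum_set_nat
      sum_list_sum_nth atLeast0LessThan)

lemma blk_sum:
  assumes "i < length ds"
  shows "(\<Sum>j<sum_list ds. (if off i \<le> j \<and> j < off i + ds!i then g (j - off i) else 0) * (X!j :: real))
       = (\<Sum>r<ds!i. g r * X!(off i + r))"
proof -
  have sub: "{off i..<off i + ds!i} \<subseteq> {..<sum_list ds}"
    using off_le[of "Suc i"] off_Suc[of i] assms by auto
  have "(\<Sum>j<sum_list ds. (if off i \<le> j \<and> j < off i + ds!i then g (j - off i) else 0) * X!j)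
      = (\<Sum>j<sum_list ds. if j \<in> {off i..<off i + ds!i} then g (j - off i) * X!j else 0)"
    by (rule sum.cong) auto
  also have "\<dots> = (\<Sum>j\<in>{off i..<off i + ds!i}. g (j - off i) * X!j)"
    using sub sum.inter_restrict[of "{..<sum_list ds}" "\<lambda>j. g (j - off i) * X!j" "{off i..<off i + ds!i}"]
    by (simp add: Int_absorb1 del: atLeastLessThan_iff)
  also have "\<dots> = (\<Sum>r\<in>{0..<ds!i}. g r * X!(off i + r))"
    using sum.shift_bounds_nat_ivl[of "\<lambda>j. g (j - off i) * X!j" 0 "off i" "ds!i"]
    by (simp add: add.commute)
  finally show ?thesis by (simp add: atLeast0LessThan)
qed


definition emb :: "nat \<Rightarrow> fcn_params \<Rightarrow> nat \<Rightarrow> unit_t" where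
  "emb i p k = (case p of (W1, B1, W2, B2) \<Rightarrow>
     (\<lambda>j. if off i \<le> j \<and> j < off i + ds!i then W1 k (j - off i) else 0, B1 k,
      \<lambda>c. if off i \<le> c \<and> c < off i + ds!i then W2 (c - off i) k else 0))"

definition par_units :: "(nat \<Rightarrow> bool) \<Rightarrow> (nat \<Rightarrow> fcn_params) \<Rightarrow> unit_t list" where
  "par_units W P = concat (map (\<lambda>i. if W i then map (emb i (P i)) [0..<4*ds!i] else []) [0..<length ds])"

definition par_B2 :: "(nat \<Rightarrow> bool) \<Rightarrow> (nat \<Rightarrow> fcn_params) \<Rightarrow> nat \<Rightarrow> real" where
  "par_B2 W P c = (\<Sum>i<length ds. if W i \<and> off i \<le> c \<and> c < off i + ds!i
       then (case P i of (W1, B1, W2, B2) \<Rightarrow> B2 (c - off i)) else 0)"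

definition par_layer :: "(nat \<Rightarrow> bool) \<Rightarrow> (nat \<Rightarrow> fcn_params) \<Rightarrow> fcn_params" where
  "par_layer W P = mk_layer (par_units W P) (par_B2 W P)"

lemma par_units_len: "length (par_units W P) \<le> 4 * sum_list ds"
proof -
  have "length (par_units W P) = (\<Sum>i<length ds. if W i then 4 * ds!i else 0)"
    by (simp add: par_units_def length_concat comp_def interv_sum_list_conv_sum_set_nat
        atLeast0LessThan if_distrib cong: if_cong)
  also have "\<dots> \<le> (\<Sum>i<length ds. 4 * ds!i)" by (rule sum_mono) auto
  also have "\<dots> = 4 * sum_list ds" by (simp add: sum_distrib_left[symmetric] sum_list_sum_nth atLeast0LessThan)
  finally show ?thesis .
qed

lemma length_res_layer: "length (res_layer d p X) = d"
  by (simp add: res_layer_def)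

lemma par_layer:
  assumes X: "length X = sum_list ds" and i: "i < length ds"
  shows "blk i (res_layer (sum_list ds) (par_layer W P) X) =
           (if W i then res_layer (ds!i) (P i) (blk i X) else blk i X)"
proof -
  obtain W1 B1 W2 B2 where Pi: "P i = (W1, B1, W2, B2)" by (cases "P i") auto
  let ?Y = "res_layer (sum_list ds) (par_layer W P) X"
  have coord: "?Y ! (off i + r) = (if W i then res_layer (ds!i) (P i) (blk i X) ! r else X!(off i + r))"
    if r: "r < ds!i" for r
  proof -
    let ?c = "off i + r"
    have c: "?c < sum_list ds" using blk_bound[OF i r] .
    have inb: "\<And>i'. (off i' \<le> ?c \<and> ?c < off i' + ds!i') \<longleftrightarrow> i' = i" using in_blk_iff[OF i r] .
    have Yc: "?Y ! ?c = X!?c + (\<Sum>u\<leftarrow>par_units W P. uval (sum_list ds) X ?c u) + par_B2 W P ?c"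
      unfolding par_layer_def res_mk_layer[OF par_units_len X] using c by simp
    have us: "(\<Sum>u\<leftarrow>par_units W P. uval (sum_list ds) X ?c u) =
        (\<Sum>i'<length ds. if W i' then (\<Sum>k<4*ds!i'. uval (sum_list ds) X ?c (emb i' (P i') k)) else 0)"
      by (simp add: par_units_def sum_list_concat' map_concat comp_def interv_sum_list_conv_sum_set_nat
        atLeast0LessThan if_distrib cong: if_cong)
    also have "\<dots> = (if W i then (\<Sum>k<4*ds!i. uval (sum_list ds) X ?c (emb i (P i) k)) else 0)"
    proof (rule sum_single)
      fix i' assume "i' \<in> {..<length ds}" "i' \<noteq> i"
      hence "\<not> (off i' \<le> ?c \<and> ?c < off i' + ds!i')" using inb by blast
      thus "(if W i' then (\<Sum>k<4*ds!i'. uval (sum_list ds) X ?c (emb i' (P i') k)) else 0) = 0"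
        by (cases "P i'") (auto simp: emb_def uval_def)
    qed (use i in auto)
    finally have us: "(\<Sum>u\<leftarrow>par_units W P. uval (sum_list ds) X ?c u) =
        (if W i then (\<Sum>k<4*ds!i. uval (sum_list ds) X ?c (emb i (P i) k)) else 0)" .
    have b2: "par_B2 W P ?c = (if W i then B2 r else 0)"
    proof -
      have "par_B2 W P ?c = (if W i \<and> off i \<le> ?c \<and> ?c < off i + ds!i
          then (case P i of (W1, B1, W2, B2) \<Rightarrow> B2 (?c - off i)) else 0)"
        unfolding par_B2_def by (rule sum_single) (use i inb in auto)
      thus ?thesis using Pi r by simp
    qed
    show ?thesis
    proof (cases "W i")
      case False thus ?thesis using Yc us b2 by simp
    next
      case True
      have "uval (sum_list ds) X ?c (emb i (P i) k) =
            W2 r k * relu ((\<Sum>j<ds!i. W1 k j * blk i X ! j) + B1 k)" for k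
      proof -
        have "(\<Sum>j<sum_list ds. (if off i \<le> j \<and> j < off i + ds!i then W1 k (j - off i) else 0) * X!j)
             = (\<Sum>j<ds!i. W1 k j * blk i X ! j)"
          unfolding blk_sum[OF i] by (rule sum.cong) (auto simp: blk_def)
        thus ?thesis using Pi r by (simp add: emb_def uval_def)
      qed
      moreover have "blk i X ! r = X ! ?c" using r by (simp add: blk_def)
      ultimately show ?thesis using True Yc us b2 Pi r
        by (simp add: res_layer_def fcn_def blk_def)
    qed
  qed
  show ?thesis
    by (rule nth_equalityI) (auto simp: blk_def length_res_layer coord)
qed


lemma blk_sel:
  assumes "\<And>t. t < length ds \<Longrightarrow> length (Sp t) = ds!t" "i < length ds"
  shows "blk i (map (selval X) (concat (map Sp [0..<length ds]))) = map (selval X) (Sp i)"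
proof (rule nth_equalityI)
  show "length (blk i (map (selval X) (concat (map Sp [0..<length ds])))) = length (map (selval X) (Sp i))"
    using assms by (simp add: blk_def)
next
  fix r assume "r < length (blk i (map (selval X) (concat (map Sp [0..<length ds]))))"
  hence r: "r < ds!i" by (simp add: blk_def)
  have "off i + r < length (concat (map Sp [0..<length ds]))"
    using length_concat_blocks[of Sp] assms blk_bound[OF assms(2) r] by simp
  thus "blk i (map (selval X) (concat (map Sp [0..<length ds]))) ! r = map (selval X) (Sp i) ! r"
    using r assms concat_nth_off[of "length ds" Sp i r] by (simp add: blk_def)
qed

lemma par_stage:
  assumes X: "length X = sum_list ds" and i: "i < length ds"
  shows "length (fold (res_layer (sum_list ds)) (map (\<lambda>j. par_layer (WW j) (PP j)) [0..<m]) X) = sum_list ds \<and>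
    blk i (fold (res_layer (sum_list ds)) (map (\<lambda>j. par_layer (WW j) (PP j)) [0..<m]) X) =
    fold (\<lambda>j Y. if WW j i then res_layer (ds!i) (PP j i) Y else Y) [0..<m] (blk i X)"
proof (induct m)
  case 0 thus ?case using X by simp
next
  case (Suc m)
  let ?Y = "fold (res_layer (sum_list ds)) (map (\<lambda>j. par_layer (WW j) (PP j)) [0..<m]) X"
  show ?case using Suc par_layer[of ?Y i "WW m" "PP m"] i by (simp add: length_res_layer)
qed

end

lemma fold_cond_take:
  "fold (\<lambda>j Y. if j < length ps then g (ps!j) Y else Y) [0..<m] Y0 = fold g (take m ps) Y0"
proof (induct m)
  case (Suc m)
  show ?case
  proof (cases "m < length ps")
    case True thus ?thesis using Suc by (simp add: take_Suc_conv_app_nth)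
  next
    case False thus ?thesis using Suc by simp
  qed
qed simp



definition lev :: "('v \<times> 'v) set \<Rightarrow> 'v \<Rightarrow> nat" where
  "lev E v = Max {length p - 1 | p. is_path E p \<and> last p = v}"

lemma path_trancl:
  assumes "is_path E p" "i < j" "j < length p"
  shows "(p!i, p!j) \<in> E\<^sup>+"
  using assms(2,3)
proof (induct j)
  case 0 thus ?case by simp
next
  case (Suc j)
  have e: "(p!j, p!Suc j) \<in> E" using assms(1) Suc(3) by (simp add: is_path_def)
  show ?case
  proof (cases "i = j")
    case True thus ?thesis using e by auto
  next
    case False hence "(p!i, p!j) \<in> E\<^sup>+" using Suc by simp
    thus ?thesis using e by (rule trancl_into_trancl)
  qed
qed

lemma path_distinct:
  assumes "acyclic E" "is_path E p"
  shows "distinct p"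
  unfolding distinct_conv_nth
proof (intro allI impI)
  fix i j assume h: "i < length p" "j < length p" "i \<noteq> j"
  show "p!i \<noteq> p!j"
  proof
    assume eq: "p!i = p!j"
    consider "i < j" | "j < i" using h by linarith
    hence "(p!i, p!i) \<in> E\<^sup>+"
      by cases (use path_trancl[OF assms(2)] h eq in metis)+
    thus False using assms(1) by (simp add: acyclic_def)
  qed
qed

lemma path_last_edge:
  assumes "is_path E p" "length p \<ge> 2"
  shows "(p!(length p - 2), last p) \<in> E"
proof -
  have "Suc (length p - 2) < length p" using assms(2) by simp
  hence "(p!(length p - 2), p!Suc (length p - 2)) \<in> E" using assms(1) by (simp add: is_path_def)
  moreover have "Suc (length p - 2) = length p - 1" using assms(2) by simp
  moreover have "p \<noteq> []" using assms(1) by (simp add: is_path_def)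
  ultimately show ?thesis by (simp add: last_conv_nth)
qed

lemma path_set:
  assumes "E \<subseteq> V \<times> V" "is_path E p" "last p \<in> V"
  shows "set p \<subseteq> V"
proof
  fix x assume "x \<in> set p"
  then obtain i where i: "i < length p" "x = p!i" by (auto simp: in_set_conv_nth)
  show "x \<in> V"
  proof (cases "Suc i < length p")
    case True thus ?thesis using assms(1,2) i by (auto simp: is_path_def)
  next
    case False hence "i = length p - 1" using i by simp
    moreover have "p \<noteq> []" using i by auto
    ultimately show ?thesis using assms(3) i by (simp add: last_conv_nth)
  qed
qed

lemma path_len:
  assumes "finite V" "E \<subseteq> V \<times> V" "acyclic E" "is_path E p" "last p \<in> V"
  shows "length p - 1 < card V"
proof -
  have "length p = card (set p)" using path_distinct[OF assms(3,4)] by (simp add: distinct_card)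
  also have "\<dots> \<le> card V" using path_set[OF assms(2,4,5)] assms(1) by (simp add: card_mono)
  finally have "length p \<le> card V" .
  moreover have "p \<noteq> []" using assms(4) by (simp add: is_path_def)
  ultimately show ?thesis by (cases p) auto
qed

lemma path_last_notin:
  assumes "E \<subseteq> V \<times> V" "is_path E p" "last p \<notin> V"
  shows "length p - 1 = 0"
  using path_last_edge[OF assms(2)] assms by (cases "length p \<ge> 2") auto

lemma single_path: "is_path E [v]" by (simp add: is_path_def)

context
  fixes V :: "'v set" and E
  assumes fin: "finite V" and EV: "E \<subseteq> V \<times> V" and acy: "acyclic E"
begin

lemma lev_set_fin: "v \<in> V \<Longrightarrow> finite {length p - 1 | p. is_path E p \<and> last p = v}"
  by (rule finite_subset[of _ "{..<card V}"]) (use path_len[OF fin EV acy] in auto)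

lemma depth_set_fin: "finite {length p - 1 | p. is_path E p}"
proof (rule finite_subset[of _ "{..<Suc (card V)}"])
  show "{length p - 1 | p. is_path E p} \<subseteq> {..<Suc (card V)}"
  proof safe
    fix p assume p: "is_path E p"
    show "length p - 1 < Suc (card V)"
      using path_len[OF fin EV acy p] path_last_notin[OF EV p] by (cases "last p \<in> V") auto
  qed
qed simp

lemma lev_ge: "v \<in> V \<Longrightarrow> is_path E p \<Longrightarrow> last p = v \<Longrightarrow> length p - 1 \<le> lev E v"
  unfolding lev_def by (rule Max_ge[OF lev_set_fin]) auto

lemma lev_ex: "v \<in> V \<Longrightarrow> \<exists>p. is_path E p \<and> last p = v \<and> lev E v = length p - 1"
proof -
  assume v: "v \<in> V"
  have "lev E v \<in> {length p - 1 | p. is_path E p \<and> last p = v}"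
    unfolding lev_def by (rule Max_in[OF lev_set_fin[OF v]]) (use single_path in force)
  thus ?thesis by auto
qed

lemma lev_lt_card: "v \<in> V \<Longrightarrow> lev E v < card V"
  using lev_ex path_len[OF fin EV acy] by force

lemma lev_edge: assumes "(u, v) \<in> E" shows "lev E u < lev E v"
proof -
  have u: "u \<in> V" and v: "v \<in> V" using assms EV by auto
  obtain p where p: "is_path E p" "last p = u" "lev E u = length p - 1" using lev_ex[OF u] by blast
  have ne: "p \<noteq> []" using p(1) by (simp add: is_path_def)
  have "is_path E (p @ [v])"
    unfolding is_path_def
  proof (intro conjI allI impI)
    fix i assume i: "Suc i < length (p @ [v])"
    show "((p @ [v]) ! i, (p @ [v]) ! Suc i) \<in> E"
    proof (cases "Suc i < length p")
      case True thus ?thesis using p(1) by (simp add: is_path_def nth_append)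
    next
      case False hence "i = length p - 1" using i by simp
      thus ?thesis using p(2) ne assms by (simp add: nth_append last_conv_nth)
    qed
  qed simp
  from lev_ge[OF v this] have "length p \<le> lev E v" by simp
  thus ?thesis using p(3) ne by (cases p) auto
qed

lemma lev_le_depth: "v \<in> V \<Longrightarrow> lev E v \<le> depth E"
  unfolding lev_def depth_def
  by (rule Max_mono) (use single_path[of E v] depth_set_fin in auto)

lemma lev_source: assumes "v \<in> V" "is_source E v" shows "lev E v = 0"
proof -
  obtain p where p: "is_path E p" "last p = v" "lev E v = length p - 1" using lev_ex[OF assms(1)] by blast
  have "\<not> length p \<ge> 2" using path_last_edge[OF p(1)] p(2) assms(2) by (auto simp: is_source_def)
  thus ?thesis using p(3) by simp
qed

end



theorem proposition12:
  fixes V :: "'v set" and E :: "('v \<times> 'v) set" and ins :: "'v \<Rightarrow> 'v list"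
    and S :: "'v \<Rightarrow> 'a set" and enc :: "'v \<Rightarrow> 'a \<Rightarrow> real list" and dm :: "'v \<Rightarrow> nat"
    and f :: "'v \<Rightarrow> 'a list \<Rightarrow> 'a"
    and dd :: "'v \<Rightarrow> nat" and LL :: "'v \<Rightarrow> nat"
    and srcs snks :: "'v list"
  assumes G: "comp_graph V E ins S enc dm f"
    and srcs: "distinct srcs" "set srcs = {v\<in>V. is_source E v}"
    and snks: "distinct snks" "set snks = {v\<in>V. is_sink E v}"
    and rep: "\<forall>v\<in>V. \<not> is_source E v \<longrightarrow>
               representable (dd v) (LL v) (prod_set S (ins v)) (prod_enc enc (ins v))
                 (prod_dim dm (ins v)) (enc v) (dm v) (f v)"
    and src_d: "\<forall>v\<in>V. is_source E v \<longrightarrow> dd v = dm v \<and> LL v = 0"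
  shows "representable (\<Sum>v\<in>V. dd v) (depth E * (Max (insert 0 (LL ` V)) + 1) + 1)
           (prod_set S srcs) (prod_enc enc srcs) (prod_dim dm srcs)
           (prod_enc enc snks) (prod_dim dm snks) (induced V E ins f srcs snks)"
proof -
  have fin: "finite V" and EV: "E \<subseteq> V \<times> V" and acy: "acyclic E"
    and lt: "\<forall>v\<in>V. local_type (S v) (enc v) (dm v)"
    and insG: "\<forall>v\<in>V. distinct (ins v) \<and> set (ins v) = {u. (u, v) \<in> E}"
    and clos: "\<forall>v\<in>V. \<not> is_source E v \<longrightarrow> (\<forall>xs\<in>prod_set S (ins v). f v xs \<in> S v)"
    using G by (auto simp: comp_graph_def)
  have ins_V: "u \<in> V" "(u, v) \<in> E" if "v \<in> V" "u \<in> set (ins v)" for u v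
    using insG that EV by auto
  have ins_lev: "lev E u < lev E v" if "v \<in> V" "u \<in> set (ins v)" for u v
    using lev_edge[OF fin EV acy ins_V(2)[OF that]] .
  have nsrc_lev: "1 \<le> lev E v" if "v \<in> V" and nsv: "\<not> is_source E v" for v
  proof -
    obtain u where "(u, v) \<in> E" using nsv by (auto simp: is_source_def)
    from lev_edge[OF fin EV acy this] show ?thesis by simp
  qed
  have encl: "length (enc v x) = dm v" if "v \<in> V" "x \<in> S v" for v x
    using lt that by (auto simp: local_type_def)
  have dmdd: "dm v \<le> dd v" if "v \<in> V" for v
    using rep src_d that by (cases "is_source E v") (auto simp: representable_def)
  have pdd: "prod_dim dm (ins v) \<le> dd v" if "v \<in> V" "\<not> is_source E v" for v
    using rep that by (auto simp: representable_def)
  have "\<exists>ps. length ps = LL v \<and> (\<forall>x\<in>prod_set S (ins v).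
      pad (dd v) (enc v (f v x)) = resmlp_apply (dd v) ps (pad (dd v) (prod_enc enc (ins v) x)))"
    if "v \<in> V" "\<not> is_source E v" for v
    using rep that by (auto simp: representable_def ResMLP_def)
  then obtain ps where ps: "\<And>v. v \<in> V \<Longrightarrow> \<not> is_source E v \<Longrightarrow> length (ps v) = LL v \<and> (\<forall>x\<in>prod_set S (ins v).
      pad (dd v) (enc v (f v x)) = resmlp_apply (dd v) (ps v) (pad (dd v) (prod_enc enc (ins v) x)))"
    by metis
  obtain rest where rest: "distinct rest" "set rest = V - set srcs"
    using finite_distinct_list[of "V - set srcs"] fin by auto
  define vs where "vs = srcs @ rest"
  have vs: "distinct vs" "set vs = V" using rest srcs by (auto simp: vs_def)
  define n where "n = length vs"
  define ds where "ds = map dd vs"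
  interpret layout ds .
  have lds: "length ds = n" by (simp add: ds_def n_def)
  have dsi: "i < n \<Longrightarrow> ds!i = dd (vs!i)" for i by (simp add: ds_def n_def)
  define d where "d = sum_list ds"
  have d_eq: "d = (\<Sum>v\<in>V. dd v)"
    using vs by (simp add: d_def ds_def sum_list_distinct_conv_sum_set)
  have vsV: "i < n \<Longrightarrow> vs!i \<in> V" for i using vs by (auto simp: n_def)
  define idx where "idx u = (THE i. i < n \<and> vs!i = u)" for u
  have idx: "idx u < n \<and> vs!(idx u) = u" if uV: "u \<in> V" for u
  proof -
    obtain i where i: "i < n" "vs!i = u" using uV vs by (auto simp: in_set_conv_nth n_def)
    have "idx u = i" unfolding idx_def
      by (rule the_equality) (use i vs(1) nth_eq_iff_index_eq n_def in auto)
    thus ?thesis using i by simp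
  qed
  have idx_nth: "idx (vs!i) = i" if "i < n" for i
    using idx[OF vsV[OF that]] vs(1) that nth_eq_iff_index_eq n_def by metis
  define lv where "lv i = lev E (vs!i)" for i
  define Lm where "Lm = Max (insert 0 (LL ` V))"
  have LLm: "LL v \<le> Lm" if "v \<in> V" for v
    unfolding Lm_def using fin that by (intro Max_ge) auto
  define D where "D = depth E"
  define gather where "gather us = concat (map (\<lambda>u. map (\<lambda>r. Some (off (idx u) + r)) [0..<dm u]) us)" for us
  define piece where "piece l i = (if lv i = l then gather (ins (vs!i)) @ replicate (ds!i - prod_dim dm (ins (vs!i))) None
      else map (\<lambda>r. Some (off i + r)) [0..<ds!i])" for l i
  define Scopy where "Scopy l = concat (map (piece l) [0..<n])" for l
  define stage where "stage l = sel_layer d (Scopy l) #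
       map (\<lambda>j. par_layer (\<lambda>i. lv i = l \<and> j < LL (vs!i)) (\<lambda>i. ps (vs!i) ! j)) [0..<Lm]" for l
  define Sfin where "Sfin = gather snks @ replicate (d - prod_dim dm snks) None"
  define N where "N = concat (map stage [1..<Suc D]) @ [sel_layer d Sfin]"
  have lenN: "length N = D * (Lm + 1) + 1"
    by (simp add: N_def stage_def length_concat comp_def sum_list_triv)
  have gather_len: "length (gather us) = prod_dim dm us" for us
    by (induct us) (simp_all add: gather_def prod_dim_def)
  have gather_bound: "\<forall>s\<in>set (gather us). \<forall>j. s = Some j \<longrightarrow> j < d" if "set us \<subseteq> V" for us
  proof (intro ballI allI impI)
    fix s j assume "s \<in> set (gather us)" "s = Some j"
    then obtain u r where ur: "u \<in> set us" "r < dm u" "j = off (idx u) + r"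
      by (auto simp: gather_def)
    have u: "u \<in> V" using ur that by auto
    show "j < d" using blk_bound[of "idx u" r] idx[OF u] dmdd[OF u] ur dsi[of "idx u"] lds
      by (simp add: d_def)
  qed
  have src_lev0: "lv i = 0" if "i < n" "is_source E (vs!i)" for i
    using lev_source[OF fin EV acy vsV[OF that(1)] that(2)] by (simp add: lv_def)
  have piece_len: "length (piece l i) = ds!i" if "i < n" "1 \<le> l" for i l
  proof (cases "lv i = l")
    case True
    hence "\<not> is_source E (vs!i)" using src_lev0[OF that(1)] that(2) by auto
    thus ?thesis using True pdd[OF vsV[OF that(1)]] gather_len dsi[OF that(1)] by (simp add: piece_def)
  qed (simp add: piece_def)
  have piece_bound: "\<forall>s\<in>set (piece l i). \<forall>j. s = Some j \<longrightarrow> j < d" if "i < n" for i l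
  proof (cases "lv i = l")
    case True
    have "set (ins (vs!i)) \<subseteq> V" using ins_V(1)[OF vsV[OF that]] by auto
    thus ?thesis using True gather_bound by (auto simp: piece_def)
  next
    case False thus ?thesis using blk_bound[of i] that lds by (auto simp: piece_def d_def)
  qed
  have Scopy_len: "length (Scopy l) = d" if "1 \<le> l" for l
    unfolding Scopy_def d_def using length_concat_blocks[of "piece l"] piece_len[OF _ that] lds by simp
  have Scopy_bound: "\<forall>s\<in>set (Scopy l). \<forall>j. s = Some j \<longrightarrow> j < d" for l
    using piece_bound by (auto simp: Scopy_def)
  have snksV: "set snks \<subseteq> V" using snks by auto
  have srcsV: "set srcs \<subseteq> V" using srcs by auto
  have Sfin_len: "length Sfin = d"
  proof -
    have "prod_dim dm snks = (\<Sum>v\<in>set snks. dm v)"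
      using snks(1) by (simp add: prod_dim_def sum_list_distinct_conv_sum_set)
    also have "\<dots> \<le> (\<Sum>v\<in>set snks. dd v)" using dmdd snksV by (intro sum_mono) auto
    also have "\<dots> \<le> d" unfolding d_eq using snksV fin by (intro sum_mono2) auto
    finally show ?thesis by (simp add: Sfin_def gather_len)
  qed
  have Sfin_bound: "\<forall>s\<in>set Sfin. \<forall>j. s = Some j \<longrightarrow> j < d"
    using gather_bound[OF snksV] by (auto simp: Sfin_def)
  have srcs_dim: "prod_dim dm srcs \<le> d"
  proof -
    have "prod_dim dm srcs = (\<Sum>v\<in>set srcs. dm v)"
      using srcs(1) by (simp add: prod_dim_def sum_list_distinct_conv_sum_set)
    also have "\<dots> \<le> (\<Sum>v\<in>set srcs. dd v)" using dmdd srcsV by (intro sum_mono) auto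
    also have "\<dots> \<le> d" unfolding d_eq using srcsV fin by (intro sum_mono2) auto
    finally show ?thesis .
  qed
  have snks_dim: "prod_dim dm snks \<le> d" using Sfin_len by (simp add: Sfin_def gather_len)
  have main: "pad d (prod_enc enc snks (induced V E ins f srcs snks xs)) = resmlp_apply d N (pad d (prod_enc enc srcs xs))"
    if xs: "xs \<in> prod_set S srcs" for xs
  proof -
    define inp where "inp v = the (map_of (zip srcs xs) v)" for v
    define val where "val = eval_graph E ins f inp (card V)"
    have stab: "\<forall>v\<in>V. \<forall>m. lev E v < k \<longrightarrow> lev E v < m \<longrightarrow> eval_graph E ins f inp k v = eval_graph E ins f inp m v" for k
    proof (induct k)
      case 0 thus ?case by simp
    next
      case (Suc k)
      show ?case
      proof (intro ballI allI impI)
        fix v m assume v: "v \<in> V" and l1: "lev E v < Suc k" and l2: "lev E v < m"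
        then obtain m' where m: "m = Suc m'" by (cases m) auto
        show "eval_graph E ins f inp (Suc k) v = eval_graph E ins f inp m v"
        proof (cases "is_source E v")
          case True thus ?thesis using m by simp
        next
          case False
          have "map (eval_graph E ins f inp k) (ins v) = map (eval_graph E ins f inp m') (ins v)"
          proof (rule map_cong[OF refl])
            fix u assume u: "u \<in> set (ins v)"
            have "lev E u < lev E v" using ins_lev[OF v u] .
            hence a: "lev E u < k" "lev E u < m'" using l1 l2 m by auto
            show "eval_graph E ins f inp k u = eval_graph E ins f inp m' u"
              using Suc[rule_format, OF ins_V(1)[OF v u] a] .
          qed
          hence "f v (map (eval_graph E ins f inp k) (ins v)) = f v (map (eval_graph E ins f inp m') (ins v))" by (rule arg_cong)
          thus ?thesis using False m by (simp del: map_eq_conv)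
        qed
      qed
    qed
    have cardV: "card V = Suc (card V - 1)" if "v \<in> V" for v
      using lev_lt_card[OF fin EV acy that] by simp
    have val_rec: "val v = f v (map val (ins v))" if v: "v \<in> V" "\<not> is_source E v" for v
    proof -
      obtain c where c: "card V = Suc c" using cardV[OF v(1)] by blast
      have "val v = eval_graph E ins f inp (Suc c) v" by (simp only: val_def c)
      also have "\<dots> = f v (map (eval_graph E ins f inp c) (ins v))" using v(2) by simp
      also have "map (eval_graph E ins f inp c) (ins v) = map val (ins v)"
      proof (rule map_cong[OF refl])
        fix u assume u: "u \<in> set (ins v)"
        have a: "lev E u < c" "lev E u < card V"
          using ins_lev[OF v(1) u] lev_lt_card[OF fin EV acy v(1)] c by auto
        show "eval_graph E ins f inp c u = val u"
          unfolding val_def using stab[rule_format, OF ins_V(1)[OF v(1) u] a] .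
      qed
      finally show ?thesis .
    qed
    have lxs: "length xs = length srcs" using xs by (simp add: prod_set_def)
    have val_src: "val (srcs!i) = xs!i" if i: "i < length srcs" for i
    proof -
      have v: "srcs!i \<in> V" "is_source E (srcs!i)" using srcs i nth_mem by fastforce+
      obtain c where c: "card V = Suc c" using cardV[OF v(1)] by blast
      have "val (srcs!i) = eval_graph E ins f inp (Suc c) (srcs!i)" by (simp only: val_def c)
      also have "\<dots> = inp (srcs!i)" using v(2) by simp
      finally have "val (srcs!i) = inp (srcs!i)" .
      thus ?thesis using map_of_zip_nth[OF lxs[symmetric] srcs(1)] i lxs by (simp add: inp_def)
    qed
    have val_S: "\<forall>v\<in>V. lev E v = k \<longrightarrow> val v \<in> S v" for k
    proof (induct k rule: less_induct)
      case (less k)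
      show ?case
      proof (intro ballI impI)
        fix v assume v: "v \<in> V" and k: "lev E v = k"
        show "val v \<in> S v"
        proof (cases "is_source E v")
          case True
          hence "v \<in> set srcs" using srcs v by auto
          then obtain i where i: "i < length srcs" "v = srcs!i" by (metis in_set_conv_nth)
          thus ?thesis using val_src xs by (simp add: prod_set_def)
        next
          case False
          have "val u \<in> S u" if u: "u \<in> set (ins v)" for u
            using less[rule_format, OF _ ins_V(1)[OF v u] refl] ins_lev[OF v u] k by simp
          hence "map val (ins v) \<in> prod_set S (ins v)"
            unfolding prod_set_def by (auto simp: nth_mem)
          thus ?thesis using val_rec[OF v False] clos v False by auto
        qed
      qed
    qed
    have valS: "v \<in> V \<Longrightarrow> val v \<in> S v" for v using val_S by blast
    have pad_nth: "pad m ys ! r = ys ! r" if "r < length ys" for m ys r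
      using that by (simp add: pad_def nth_append)
    have gather_sel: "map (selval X) (gather us) = prod_enc enc us (map val us)"
      if X: "length X = d" and us: "set us \<subseteq> V"
        and bl: "\<forall>u\<in>set us. blk (idx u) X = pad (dd u) (enc u (val u))" for X us
      using us bl
    proof (induct us)
      case Nil thus ?case by (simp add: gather_def prod_enc_def)
    next
      case (Cons u us)
      have u: "u \<in> V" using Cons by simp
      have b: "blk (idx u) X = pad (dd u) (enc u (val u))" using Cons by simp
      have le: "length (enc u (val u)) = dm u" using encl[OF u valS[OF u]] .
      have "map (selval X) (map (\<lambda>r. Some (off (idx u) + r)) [0..<dm u]) = enc u (val u)"
      proof (rule nth_equalityI)
        fix r assume "r < length (map (selval X) (map (\<lambda>r. Some (off (idx u) + r)) [0..<dm u]))"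
        hence r: "r < dm u" by simp
        have "r < ds!(idx u)" using r dmdd[OF u] dsi idx[OF u] by simp
        hence "X ! (off (idx u) + r) = blk (idx u) X ! r" by (simp add: blk_def)
        also have "\<dots> = enc u (val u) ! r" using b pad_nth r le by simp
        finally show "map (selval X) (map (\<lambda>r. Some (off (idx u) + r)) [0..<dm u]) ! r = enc u (val u) ! r"
          using r by (simp add: selval_def)
      qed (simp add: le)
      moreover have "map (selval X) (gather us) = prod_enc enc us (map val us)" using Cons by simp
      ultimately show ?case by (simp add: gather_def prod_enc_def)
    qed
    define good where "good l X \<longleftrightarrow> length X = d \<and>
        (\<forall>i<n. lv i \<le> l \<longrightarrow> blk i X = pad (ds!i) (enc (vs!i) (val (vs!i))))" for l X
    have pmv: "map val (ins v) \<in> prod_set S (ins v)" if "v \<in> V" for v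
      unfolding prod_set_def using valS ins_V(1)[OF that] by auto
    have step: "good l (fold (res_layer d) (stage l) X)" if l: "1 \<le> l" and g: "good (l - 1) X" for l X
    proof -
      have X: "length X = d" using g by (simp add: good_def)
      define Y where "Y = res_layer d (sel_layer d (Scopy l)) X"
      have Y: "Y = map (selval X) (Scopy l)"
        unfolding Y_def by (rule sel_layer[OF Scopy_len[OF l] Scopy_bound X])
      have lY: "length Y = d" using Y Scopy_len[OF l] by simp
      have blkY: "blk i Y = map (selval X) (piece l i)" if "i < n" for i
        unfolding Y Scopy_def using blk_sel[of "piece l" i X] piece_len[OF _ l] lds that by simp
      define WW where "WW j i \<longleftrightarrow> lv i = l \<and> j < LL (vs!i)" for j i
      define PP where "PP j i = ps (vs!i) ! j" for j i
      define Z where "Z = fold (res_layer d) (map (\<lambda>j. par_layer (WW j) (PP j)) [0..<Lm]) Y"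
      have eqZ: "fold (res_layer d) (stage l) X = Z"
        unfolding Z_def Y_def stage_def WW_def PP_def by simp
      have parZ: "length Z = d \<and> blk i Z = fold (\<lambda>j Y. if WW j i then res_layer (ds!i) (PP j i) Y else Y) [0..<Lm] (blk i Y)"
        if "i < n" for i
        unfolding Z_def d_def using par_stage[of Y i WW PP Lm] lY that lds by (simp add: d_def)
      have "good l Z"
        unfolding good_def
      proof (intro conjI allI impI)
        show "length Z = d" unfolding Z_def by (rule length_fold_res[OF lY])
      next
        fix i assume i: "i < n" and li: "lv i \<le> l"
        let ?v = "vs!i"
        have v: "?v \<in> V" using vsV[OF i] .
        show "blk i Z = pad (ds!i) (enc ?v (val ?v))"
        proof (cases "lv i = l")
          case False
          have "blk i Z = blk i Y" using parZ[OF i] False by (simp add: WW_def fold_triv)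
          also have "\<dots> = blk i X" using blkY[OF i] False
            by (simp add: piece_def blk_def selval_def comp_def)
          also have "\<dots> = pad (ds!i) (enc ?v (val ?v))" using g i li False by (simp add: good_def)
          finally show ?thesis .
        next
          case True
          have ns: "\<not> is_source E ?v" using src_lev0[OF i] True l by auto
          have bl: "\<forall>u\<in>set (ins ?v). blk (idx u) X = pad (dd u) (enc u (val u))"
          proof
            fix u assume u: "u \<in> set (ins ?v)"
            have uV: "u \<in> V" using ins_V(1)[OF v u] .
            have "lv (idx u) \<le> l - 1" using ins_lev[OF v u] idx[OF uV] True by (simp add: lv_def)
            thus "blk (idx u) X = pad (dd u) (enc u (val u))"
              using g idx[OF uV] dsi[of "idx u"] by (simp add: good_def)
          qed
          have gs: "map (selval X) (gather (ins ?v)) = prod_enc enc (ins ?v) (map val (ins ?v))"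
            using gather_sel[OF X _ bl] ins_V(1)[OF v] by auto
          have lgs: "length (prod_enc enc (ins ?v) (map val (ins ?v))) = prod_dim dm (ins ?v)"
            using arg_cong[OF gs, of length] gather_len by simp
          have "blk i Y = pad (ds!i) (prod_enc enc (ins ?v) (map val (ins ?v)))"
            using blkY[OF i] True gs lgs by (simp add: piece_def pad_def selval_def)
          moreover have "fold (\<lambda>j Y. if WW j i then res_layer (ds!i) (PP j i) Y else Y) [0..<Lm] =
                fold (res_layer (ds!i)) (ps ?v)"
          proof -
            have "fold (\<lambda>j Y. if WW j i then res_layer (ds!i) (PP j i) Y else Y) [0..<Lm] =
                  fold (\<lambda>j Y. if j < length (ps ?v) then res_layer (ds!i) (ps ?v ! j) Y else Y) [0..<Lm]"
              unfolding WW_def PP_def using True ps[OF v ns] by simp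
            also have "\<dots> = fold (res_layer (ds!i)) (take Lm (ps ?v))"
              by (rule ext) (rule fold_cond_take)
            also have "take Lm (ps ?v) = ps ?v" using ps[OF v ns] LLm[OF v] by simp
            finally show ?thesis .
          qed
          ultimately have "blk i Z = resmlp_apply (dd ?v) (ps ?v) (pad (dd ?v) (prod_enc enc (ins ?v) (map val (ins ?v))))"
            using parZ[OF i] dsi[OF i] by (simp add: resmlp_apply_def)
          also have "\<dots> = pad (dd ?v) (enc ?v (f ?v (map val (ins ?v))))"
            using ps[OF v ns] pmv[OF v] by simp
          also have "\<dots> = pad (ds!i) (enc ?v (val ?v))" using val_rec[OF v ns] dsi[OF i] by simp
          finally show ?thesis .
        qed
      qed
      thus ?thesis using eqZ by simp
    qed
    define X0 where "X0 = pad d (prod_enc enc srcs xs)"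
    define B where "B t = enc (srcs!t) (xs!t)" for t
    have ns: "n = length srcs + length rest" by (simp add: n_def vs_def)
    have vs_src: "t < length srcs \<Longrightarrow> vs!t = srcs!t" for t by (simp add: vs_def nth_append)
    have srcV: "t < length srcs \<Longrightarrow> srcs!t \<in> V \<and> is_source E (srcs!t)" for t
      using srcs nth_mem by blast
    have lenB: "length (B t) = ds!t" if "t < length srcs" for t
    proof -
      have "xs!t \<in> S (srcs!t)" using xs that by (simp add: prod_set_def)
      thus ?thesis using encl srcV[OF that] src_d dsi[of t] vs_src[OF that] that ns
        by (simp add: B_def)
    qed
    have penc: "prod_enc enc srcs xs = concat (map B [0..<length srcs])"
    proof -
      have "zip srcs xs = map (\<lambda>t. (srcs!t, xs!t)) [0..<length srcs]"
        by (rule nth_equalityI) (simp_all add: lxs)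
      thus ?thesis unfolding B_def by (simp add: prod_enc_def comp_def)
    qed
    have lenC: "length (concat (map B [0..<length srcs])) = off (length srcs)"
      using lenB by (simp add: length_concat off_def comp_def interv_sum_list_conv_sum_set_nat atLeast0LessThan)
    have "off (length srcs) \<le> d" using off_le[of "length srcs"] lds ns by (simp add: d_def)
    hence lX0: "length X0 = d" by (simp add: X0_def pad_def penc lenC)
    have g0: "good 0 X0"
      unfolding good_def
    proof (intro conjI allI impI)
      show "length X0 = d" by (rule lX0)
    next
      fix i assume i: "i < n" and li: "lv i \<le> 0"
      have src: "is_source E (vs!i)" using nsrc_lev[OF vsV[OF i]] li by (auto simp: lv_def)
      have isrc: "i < length srcs"
      proof (rule ccontr)
        assume "\<not> i < length srcs"
        hence "vs!i \<in> set rest" using i ns by (simp add: vs_def nth_append)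
        thus False using rest src vsV[OF i] srcs by auto
      qed
      have "blk i X0 = B i"
      proof (rule nth_equalityI)
        show "length (blk i X0) = length (B i)" using lenB[OF isrc] by (simp add: blk_def)
      next
        fix r assume "r < length (blk i X0)"
        hence r: "r < ds!i" by (simp add: blk_def)
        have "off i + r < off (length srcs)" using off_mono[of "Suc i" "length srcs"] isrc off_Suc[of i] r by simp
        hence "X0 ! (off i + r) = concat (map B [0..<length srcs]) ! (off i + r)"
          by (simp add: X0_def pad_def penc nth_append lenC)
        also have "\<dots> = B i ! r" by (rule concat_nth_off) (use lenB isrc r in auto)
        finally show "blk i X0 ! r = B i ! r" using r by (simp add: blk_def)
      qed
      thus "blk i X0 = pad (ds!i) (enc (vs!i) (val (vs!i)))"
        using lenB[OF isrc] val_src[OF isrc] vs_src[OF isrc] by (simp add: B_def pad_def)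
    qed
    have iter: "k \<le> D \<Longrightarrow> good k (fold (res_layer d) (concat (map stage [1..<Suc k])) X0)" for k
    proof (induct k)
      case 0 thus ?case using g0 by simp
    next
      case (Suc k)
      thus ?case using step[of "Suc k" "fold (res_layer d) (concat (map stage [1..<Suc k])) X0"] by simp
    qed
    define XD where "XD = fold (res_layer d) (concat (map stage [1..<Suc D])) X0"
    have gD: "good D XD" using iter[of D] by (simp add: XD_def)
    have "resmlp_apply d N X0 = res_layer d (sel_layer d Sfin) XD"
      by (simp add: resmlp_apply_def N_def XD_def)
    also have "\<dots> = map (selval XD) Sfin"
      by (rule sel_layer[OF Sfin_len Sfin_bound]) (use gD in \<open>simp add: good_def\<close>)
    also have "\<dots> = pad d (prod_enc enc snks (map val snks))"
    proof -
      have bl: "\<forall>u\<in>set snks. blk (idx u) XD = pad (dd u) (enc u (val u))"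
      proof
        fix u assume "u \<in> set snks"
        hence u: "u \<in> V" using snksV by auto
        have "lv (idx u) \<le> D" using lev_le_depth[OF fin EV acy u] idx[OF u] by (simp add: lv_def D_def)
        thus "blk (idx u) XD = pad (dd u) (enc u (val u))" using gD idx[OF u] dsi[of "idx u"] by (simp add: good_def)
      qed
      have gs: "map (selval XD) (gather snks) = prod_enc enc snks (map val snks)"
        using gather_sel[OF _ snksV bl] gD by (simp add: good_def)
      have "length (prod_enc enc snks (map val snks)) = prod_dim dm snks"
        using arg_cong[OF gs, of length] gather_len by simp
      thus ?thesis using gs by (simp add: Sfin_def pad_def selval_def)
    qed
    finally show ?thesis by (simp add: induced_def val_def inp_def[abs_def] X0_def)
  qed
  show ?thesis
    unfolding representable_def
  proof (intro conjI)
    show "max (prod_dim dm srcs) (prod_dim dm snks) \<le> (\<Sum>v\<in>V. dd v)"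
      using srcs_dim snks_dim d_eq by simp
    show "\<exists>F\<in>ResMLP (\<Sum>v\<in>V. dd v) (depth E * (Max (insert 0 (LL ` V)) + 1) + 1).
        \<forall>x\<in>prod_set S srcs. pad (\<Sum>v\<in>V. dd v) (prod_enc enc snks (induced V E ins f srcs snks x)) =
          F (pad (\<Sum>v\<in>V. dd v) (prod_enc enc srcs x))"
    proof (rule bexI[where x="resmlp_apply d N"])
      show "resmlp_apply d N \<in> ResMLP (\<Sum>v\<in>V. dd v) (depth E * (Max (insert 0 (LL ` V)) + 1) + 1)"
        unfolding ResMLP_def using lenN d_eq by (auto simp: D_def Lm_def)
    qed (use main d_eq in auto)
  qed
qed


end
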